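(* Fix non-negative integers $r$ and $m>r$. Let $b_j=(1^j,2^j,\dots,m^j)^T\in\mathbb{R}^m$ for $j=0,\dots,r$, and let $\tilde b_0,\dots,\tilde b_r$ be obtained by Gram–Schmidt orthogonalization (without normalization) of the ordered set $b_0,\dots,b_r$, i.e. $\tilde b_j=b_j-\Pi_{j-1}b_j$ where $\Pi_{j-1}$ is the orthogonal projection onto $\mathrm{Span}(b_0,\dots,b_{j-1})$ (and $\tilde b_0=b_0$). Then there is a constant $c_r>0$ depending only on $r$ such that for every $j\in\{0,\dots,r\}$, $$\|\tilde b_j\|^2\ge c_r\,m^{2j+1}.$$ *)

theory Defs
  imports "Jordan_Normal_Form.Gram_Schmidt"
begin

definition power_vec :: "nat \<Rightarrow> nat \<Rightarrow> real vec" where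
  "power_vec m j = vec m (\<lambda>i. real (i + 1) ^ j)"

definition power_vecs :: "nat \<Rightarrow> nat \<Rightarrow> real vec list" where
  "power_vecs m r = map (power_vec m) [0..<Suc r]"

text \<open>Unnormalized Gram-Schmidt orthogonalization (library algorithm):
  tilde b_j = b_j - sum_{k<j} (<b_j, tilde b_k>/<tilde b_k, tilde b_k>) tilde b_k.\<close>
definition gs_power_vecs :: "nat \<Rightarrow> nat \<Rightarrow> real vec list" where
  "gs_power_vecs m r = gram_schmidt m (power_vecs m r)"

end

theory Submission imports Defs begin

lemma sq_diff_bound: "((u::real) - v)^2 \<le> 2 * u^2 + 2 * v^2"
proof -
  have "(u-v)^2 + (u+v)^2 = 2*u^2+2*v^2" by (simp add: power2_eq_square algebra_simps)
  moreover have "0 \<le> (u+v)^2" by simp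
  ultimately show ?thesis by linarith
qed

lemma shift_diff:
  fixes a :: "nat \<Rightarrow> real"
  shows "(\<Sum>n\<le>Suc j. a n * (x + L)^n) - (\<Sum>n\<le>Suc j. a n * x^n)
       = (\<Sum>k\<le>j. (\<Sum>n=Suc k..Suc j. a n * real (n choose k) * L^(n-k)) * x^k)"
proof -
  have bin: "(x+L)^n - x^n = (\<Sum>k<n. real (n choose k) * x^k * L^(n-k))" for n
    by (simp add: binomial_ring lessThan_Suc_atMost[symmetric])
  have "(\<Sum>n\<le>Suc j. a n * (x + L)^n) - (\<Sum>n\<le>Suc j. a n * x^n)
      = (\<Sum>n\<le>Suc j. a n * ((x + L)^n - x^n))"
    by (simp only: sum_subtractf[symmetric] right_diff_distrib)
  also have "\<dots> = (\<Sum>n\<le>Suc j. (\<Sum>k<n. a n * real (n choose k) * L^(n-k) * x^k))"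
    by (rule sum.cong[OF refl]) (simp add: bin sum_distrib_left mult_ac)
  also have "\<dots> = (\<Sum>k<Suc j. (\<Sum>n=Suc k..Suc j. a n * real (n choose k) * L^(n-k) * x^k))"
    by (rule sum.nested_swap')
  also have "\<dots> = (\<Sum>k\<le>j. (\<Sum>n=Suc k..Suc j. a n * real (n choose k) * L^(n-k) * x^k))"
    by (simp only: lessThan_Suc_atMost)
  also have "\<dots> = (\<Sum>k\<le>j. (\<Sum>n=Suc k..Suc j. a n * real (n choose k) * L^(n-k)) * x^k)"
    by (simp only: sum_distrib_right)
  finally show ?thesis .
qed

lemma diff_ineq:
  fixes a :: "nat \<Rightarrow> real"
  shows "(\<Sum>k\<le>j. (\<Sum>n\<le>j. a n * (x0 + real k * L)^n)^2) \<ge> (1/4)^j * (a j)^2 * L^(2*j)"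
proof (induction j arbitrary: a x0)
  case 0
  then show ?case by simp
next
  case (Suc j)
  define f where "f x = (\<Sum>n\<le>Suc j. a n * x^n)" for x
  define b where "b k = (\<Sum>n=Suc k..Suc j. a n * real (n choose k) * L^(n-k))" for k
  have fd: "f (x + L) - f x = (\<Sum>k\<le>j. b k * x^k)" for x
    unfolding f_def b_def by (rule shift_diff)
  have bj: "b j = a (Suc j) * real (Suc j) * L"
    unfolding b_def by simp
  define F where "F k = (f (x0 + real k * L))^2" for k
  have IH: "(\<Sum>k\<le>j. (\<Sum>n\<le>j. b n * (x0 + real k * L)^n)^2) \<ge> (1/4)^j * (b j)^2 * L^(2*j)"
    by (rule Suc.IH)
  have eq: "(\<Sum>n\<le>j. b n * (x0 + real k * L)^n) = f (x0 + real (Suc k) * L) - f (x0 + real k * L)" for k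
    using fd[of "x0 + real k * L"] by (simp add: algebra_simps)
  have le1: "(\<Sum>n\<le>j. b n * (x0 + real k * L)^n)^2 \<le> 2 * F (Suc k) + 2 * F k" for k
    unfolding eq F_def by (rule sq_diff_bound)
  have s1: "(\<Sum>k\<le>j. F (Suc k)) \<le> (\<Sum>k\<le>Suc j. F k)"
  proof -
    have "(\<Sum>k\<le>j. F (Suc k)) = (\<Sum>k\<in>Suc ` {..j}. F k)" by (simp add: sum.reindex)
    also have "\<dots> \<le> (\<Sum>k\<le>Suc j. F k)"
      by (rule sum_mono2) (auto simp: F_def)
    finally show ?thesis .
  qed
  have s2: "(\<Sum>k\<le>j. F k) \<le> (\<Sum>k\<le>Suc j. F k)"
    by (simp add: F_def)
  have "(1/4)^j * (b j)^2 * L^(2*j) \<le> (\<Sum>k\<le>j. 2 * F (Suc k) + 2 * F k)"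
  proof -
    have "(\<Sum>k\<le>j. (\<Sum>n\<le>j. b n * (x0 + real k * L)^n)^2) \<le> (\<Sum>k\<le>j. 2 * F (Suc k) + 2 * F k)"
      by (rule sum_mono) (rule le1)
    then show ?thesis using IH by linarith
  qed
  also have "\<dots> \<le> 4 * (\<Sum>k\<le>Suc j. F k)"
    using s1 s2 by (simp add: sum.distrib sum_distrib_left[symmetric])
  finally have A: "(1/4)^j * ((b j)^2 * L^(2*j)) \<le> 4 * (\<Sum>k\<le>Suc j. F k)" by (simp add: mult_ac)
  have B: "(b j)^2 * L^(2*j) = ((a (Suc j))^2 * L^(2 * Suc j)) * (real (Suc j))^2"
    unfolding bj by (simp add: power_mult_distrib power_add power2_eq_square mult_ac)
  have C: "(a (Suc j))^2 * L^(2 * Suc j) \<le> ((a (Suc j))^2 * L^(2 * Suc j)) * (real (Suc j))^2"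
  proof -
    have "1 \<le> (real (Suc j))^2" by simp
    moreover have "0 \<le> (a (Suc j))^2 * L^(2 * Suc j)"
      by (rule mult_nonneg_nonneg[OF zero_le_power2 zero_le_even_power]) simp
    ultimately show ?thesis using mult_left_mono[of 1 "(real (Suc j))^2"] by simp
  qed
  have "(1/4)^j * ((a (Suc j))^2 * L^(2 * Suc j)) \<le> (1/4)^j * ((b j)^2 * L^(2*j))"
    unfolding B by (rule mult_left_mono[OF C]) simp
  with A have "(1/4)^j * ((a (Suc j))^2 * L^(2 * Suc j)) \<le> 4 * (\<Sum>k\<le>Suc j. F k)" by linarith
  then show ?case by (simp add: F_def f_def mult_ac)
qed


lemma sum_blocks: fixes n L :: nat shows "(\<Sum>i<n*L. F i) = (\<Sum>k<n. \<Sum>s<L. F (k*L+s)) "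
proof (induction n)
  case 0 then show ?case by simp
next
  case (Suc n)
  have "(\<Sum>i<Suc n*L. F i) = (\<Sum>i<n*L + L. F i)" by (simp add: add.commute)
  also have "\<dots> = (\<Sum>i<n*L. F i) + (\<Sum>i=n*L..<n*L+L. F i)"
    using sum.atLeastLessThan_concat[of 0 "n*L" "n*L+L" F] by (simp add: atLeast0LessThan)
  also have "(\<Sum>i=n*L..<n*L+L. F i) = (\<Sum>s<L. F (n*L+s))"
    using sum.atLeastLessThan_shift_0[of F "n*L" "n*L+L"] by (simp add: atLeast0LessThan comp_def)
  finally show ?case using Suc by simp
qed

lemma block_bound:
  fixes a :: "nat \<Rightarrow> real"
  assumes aj: "a j = 1" and L: "L \<ge> 1" and m: "Suc j * L \<le> m"
  shows "(\<Sum>i<m. (\<Sum>n\<le>j. a n * real (i+1)^n)^2) \<ge> (1/4)^j * real L ^ (2*j+1)"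
proof -
  define F where "F i = (\<Sum>n\<le>j. a n * real (i+1)^n)^2" for i
  have "(\<Sum>i<Suc j * L. F i) \<le> (\<Sum>i<m. F i)"
    by (rule sum_mono2) (use m in \<open>auto simp: F_def\<close>)
  moreover have "(\<Sum>i<Suc j * L. F i) = (\<Sum>s<L. \<Sum>k<Suc j. F (k*L+s))"
    unfolding sum_blocks by (rule sum.swap)
  moreover have "(\<Sum>k<Suc j. F (k*L+s)) \<ge> (1/4)^j * real L ^ (2*j)" for s
  proof -
    have "(\<Sum>k\<le>j. (\<Sum>n\<le>j. a n * (real (s+1) + real k * real L)^n)^2) \<ge> (1/4)^j * (a j)^2 * (real L)^(2*j)"
      by (rule diff_ineq)
    moreover have re: "real (k*L+s+1) = real (s+1) + real k * real L" for k by simp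
    have "(\<Sum>k<Suc j. F (k*L+s)) = (\<Sum>k\<le>j. (\<Sum>n\<le>j. a n * (real (s+1) + real k * real L)^n)^2)"
      unfolding F_def lessThan_Suc_atMost by (rule sum.cong[OF refl]) (simp only: re)
    ultimately show ?thesis using aj by simp
  qed
  then have "(\<Sum>s<L. \<Sum>k<Suc j. F (k*L+s)) \<ge> (\<Sum>s<L. (1/4)^j * real L ^ (2*j))"
    by (intro sum_mono) auto
  moreover have "(\<Sum>s<L. (1/4)^j * real L ^ (2*j)) = (1/4)^j * real L ^ (2*j+1)" by simp
  ultimately show ?thesis unfolding F_def by linarith
qed


definition Vs :: "nat \<Rightarrow> nat \<Rightarrow> real vec set" where
  "Vs m d = {v. dim_vec v = m \<and> (\<exists>a. \<forall>i<m. v $ i = (\<Sum>n<d. a n * real (i+1)^n))}"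

lemma Vs_zero: "0\<^sub>v m \<in> Vs m d"
  unfolding Vs_def by (auto intro!: exI[of _ "\<lambda>_. 0"])

lemma Vs_add: assumes "u \<in> Vs m d" "v \<in> Vs m d" shows "u + v \<in> Vs m d"
proof -
  from assms obtain a b where u: "dim_vec u = m" "\<forall>i<m. u $ i = (\<Sum>n<d. a n * real (i+1)^n)"
    and v: "dim_vec v = m" "\<forall>i<m. v $ i = (\<Sum>n<d. b n * real (i+1)^n)"
    unfolding Vs_def by auto
  show ?thesis unfolding Vs_def
    using u v by (auto intro!: exI[of _ "\<lambda>n. a n + b n"] simp: sum.distrib distrib_right)
qed

lemma Vs_smult: assumes "u \<in> Vs m d" shows "c \<cdot>\<^sub>v u \<in> Vs m d"
proof -
  from assms obtain a where u: "dim_vec u = m" "\<forall>i<m. u $ i = (\<Sum>n<d. a n * real (i+1)^n)"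
    unfolding Vs_def by auto
  show ?thesis unfolding Vs_def
    using u by (auto intro!: exI[of _ "\<lambda>n. c * a n"] simp: sum_distrib_left mult_ac)
qed

lemma Vs_Suc: assumes "u \<in> Vs m d" shows "u \<in> Vs m (Suc d)"
proof -
  from assms obtain a where u: "dim_vec u = m" "\<forall>i<m. u $ i = (\<Sum>n<d. a n * real (i+1)^n)"
    unfolding Vs_def by auto
  have "(\<Sum>n<Suc d. (a(d:=0)) n * real (i+1)^n) = (\<Sum>n<d. a n * real (i+1)^n)" for i
    by (simp add: sum.lessThan_Suc)
  then show ?thesis unfolding Vs_def
    using u by (auto intro!: exI[of _ "a(d:=0)"])
qed

lemma Vs_power: "power_vec m d \<in> Vs m (Suc d)"
proof -
  have "(\<Sum>n<Suc d. (if n = d then 1 else 0) * real (i+1)^n) = real (i+1)^d" for i :: nat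
    by (simp add: sum.lessThan_Suc)
  then show ?thesis unfolding Vs_def power_vec_def
    by (auto intro!: exI[of _ "\<lambda>n. if n = d then 1 else 0"])
qed

lemma Vs_adjuster: "set us \<subseteq> Vs m d \<Longrightarrow> adjuster m w us \<in> Vs m d"
  by (induction us) (auto intro!: Vs_add Vs_smult Vs_zero)

lemma gs_sub2:
  "length us = k \<Longrightarrow> set us \<subseteq> Vs m k \<Longrightarrow> t < l \<Longrightarrow>
   \<exists>w\<in>Vs m (k+t). gram_schmidt_sub2 m us (map (power_vec m) [k..<k+l]) ! t = w + power_vec m (k+t)"
proof (induction l arbitrary: k us t)
  case 0 then show ?case by simp
next
  case (Suc l)
  define u where "u = adjuster m (power_vec m k) us + power_vec m k"
  have ups: "[k..<k+Suc l] = k # [Suc k..<Suc k + l]" by (simp add: upt_conv_Cons)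
  have gs: "gram_schmidt_sub2 m us (map (power_vec m) [k..<k+Suc l])
      = u # gram_schmidt_sub2 m (u # us) (map (power_vec m) [Suc k..<Suc k + l])"
    unfolding ups u_def by (simp add: Let_def)
  have adj: "adjuster m (power_vec m k) us \<in> Vs m k" using Suc.prems Vs_adjuster by blast
  show ?case
  proof (cases t)
    case 0
    then show ?thesis using gs adj u_def by auto
  next
    case (Suc t')
    have uV: "u \<in> Vs m (Suc k)" unfolding u_def by (intro Vs_add Vs_Suc adj Vs_power)
    have "set (u#us) \<subseteq> Vs m (Suc k)" using uV Suc.prems Vs_Suc by auto
    moreover have "length (u#us) = Suc k" using Suc.prems by simp
    moreover have "t' < l" using Suc.prems Suc by simp
    ultimately obtain w where "w \<in> Vs m (Suc k + t')"
      "gram_schmidt_sub2 m (u # us) (map (power_vec m) [Suc k..<Suc k + l]) ! t' = w + power_vec m (Suc k + t')"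
      using Suc.IH by blast
    then show ?thesis using gs Suc by auto
  qed
qed

lemma gs_entry:
  assumes "j \<le> r"
  shows "\<exists>a. a j = 1 \<and> dim_vec (gs_power_vecs m r ! j) = m \<and>
     (\<forall>i<m. (gs_power_vecs m r ! j) $ i = (\<Sum>n\<le>j. a n * real (i+1)^n))"
proof -
  have "gs_power_vecs m r = gram_schmidt_sub2 m [] (map (power_vec m) [0..<0+Suc r])"
    unfolding gs_power_vecs_def power_vecs_def gram_schmidt_code by simp
  moreover obtain w where w: "w \<in> Vs m (0+j)"
    "gram_schmidt_sub2 m [] (map (power_vec m) [0..<0+Suc r]) ! j = w + power_vec m (0+j)"
    using gs_sub2[of "[]" 0 m j "Suc r"] assms by auto
  ultimately have e: "gs_power_vecs m r ! j = w + power_vec m j" by simp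
  from w(1) obtain a where a: "dim_vec w = m" "\<forall>i<m. w $ i = (\<Sum>n<j. a n * real (i+1)^n)"
    unfolding Vs_def by auto
  have "(\<Sum>n\<le>j. (a(j:=1)) n * real (i+1)^n) = (\<Sum>n<j. a n * real (i+1)^n) + real (i+1)^j" for i
    unfolding lessThan_Suc_atMost[symmetric] by (simp add: sum.lessThan_Suc)
  then show ?thesis using a e
    by (intro exI[of _ "a(j:=1)"]) (auto simp: power_vec_def)
qed

theorem lemma9:
  fixes r :: nat
  shows "\<exists>c :: real. c > 0 \<and>
    (\<forall>m :: nat. m > r \<longrightarrow>
      (\<forall>j \<le> r. (gs_power_vecs m r ! j) \<bullet> (gs_power_vecs m r ! j) \<ge> c * real m ^ (2 * j + 1)))"
proof (intro exI[of _ "(1/4)^r * (1 / (2 * (real r + 1)))^(2*r+1)"] conjI allI impI)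
  show "0 < (1/4)^r * (1 / (2 * (real r + 1)))^(2*r+1)" by simp
  fix m j assume m: "r < m" and j: "j \<le> r"
  define q where "q = 1 / (2 * (real r + 1))"
  have q0: "0 < q" "q \<le> 1" unfolding q_def by auto
  obtain a where a: "a j = 1" "dim_vec (gs_power_vecs m r ! j) = m"
     "\<forall>i<m. (gs_power_vecs m r ! j) $ i = (\<Sum>n\<le>j. a n * real (i+1)^n)"
    using gs_entry[OF j] by blast
  define L where "L = m div Suc j"
  have L1: "L \<ge> 1" unfolding L_def using m j div_greater_zero_iff[of m "Suc j"] by simp
  have LM: "Suc j * L \<le> m" unfolding L_def by (rule times_div_less_eq_dividend)
  have "m < Suc j * L + Suc j" unfolding L_def
    by (metis add.commute div_mult_mod_eq mod_less_divisor mult.commute nat_add_left_cancel_less zero_less_Suc)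
  moreover have "Suc j \<le> Suc j * L" using L1 mult_le_mono2[of 1 L "Suc j"] by simp
  ultimately have "m \<le> 2 * (Suc j * L)" by linarith
  moreover have "Suc j * L \<le> Suc r * L" using j by simp
  ultimately have "m \<le> 2 * (Suc r * L)" by linarith
  then have "real m \<le> real (2 * (Suc r * L))" by (simp only: of_nat_le_iff)
  then have "real m \<le> 2 * (real r + 1) * real L" by (simp add: algebra_simps)
  then have qm: "q * real m \<le> real L" unfolding q_def by (simp add: field_simps)
  have "(gs_power_vecs m r ! j) \<bullet> (gs_power_vecs m r ! j) = (\<Sum>i<m. (\<Sum>n\<le>j. a n * real (i+1)^n)^2)"
    unfolding scalar_prod_def using a by (simp add: power2_eq_square atLeast0LessThan)
  also have "\<dots> \<ge> (1/4)^j * real L ^ (2*j+1)" by (rule block_bound[where a=a and j=j, OF a(1) L1 LM])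
  finally have main: "(1/4)^j * real L ^ (2*j+1) \<le> (gs_power_vecs m r ! j) \<bullet> (gs_power_vecs m r ! j)" .
  have "(1/4)^r * q^(2*r+1) * real m ^ (2*j+1) \<le> (1/4)^j * q^(2*j+1) * real m ^ (2*j+1)"
  proof (intro mult_right_mono mult_mono)
    show "(1/4::real)^r \<le> (1/4)^j" using j by (intro power_decreasing) auto
    show "q^(2*r+1) \<le> q^(2*j+1)" using j q0 by (intro power_decreasing) auto
  qed (use q0 in auto)
  also have "\<dots> = (1/4)^j * (q * real m)^(2*j+1)" by (simp add: power_mult_distrib)
  also have "\<dots> \<le> (1/4)^j * real L^(2*j+1)"
    using qm q0 by (intro mult_left_mono power_mono) auto
  finally show "(1/4)^r * (1 / (2 * (real r + 1)))^(2*r+1) * real m ^ (2*j+1)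
      \<le> (gs_power_vecs m r ! j) \<bullet> (gs_power_vecs m r ! j)" using main unfolding q_def by linarith
qed

end
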